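(* Let $q\in\mathcal F_{\mathrm{FSSA}}$, let $Q$ be the probability measure with density $q$, and let $r>0$, $C(r,y)$, $D_r$, the partitions $A^{(m)}_0,\dots,A^{(m)}_m$ and $M$ be witnesses for membership of $q$ in $\mathcal F_{\mathrm{FSSA}}$. Then $q\log_+q\in\mathcal L^1(\mathbb{R}^d)$ and $$\int_{\mathbb{R}^d}q(y)\log_+q(y)\,\mathrm{d}y\le\int_{\operatorname{supp}(q)}D_r(y)\,\mathrm{d}Q(y)+d\log_+\!\Big(\frac2r\Big).$$
   Context: $\log_+t=\max\{\log t,0\}$ for $t>0$, $\log_+0=0$. Densities are w.r.t. Lebesgue measure; $F(A)=\int_Af\,\mathrm{d}x$; $\operatorname{supp}(f)=\{x:f(x)>0\}$. Comparison cubes are closed axis-aligned cubes; partition cubes may be half-open so as to be disjoint. "A cube of side $r$ with a vertex at $y$" means a closed axis-aligned cube of side length $r$ having $y$ as one of its vertices. A family of cubes of common side length is adjacent if they have pairwise disjoint interiors and the union of their closures is connected. Definition ($\mathcal F_{\mathrm{FSSA}}$): a density $f$ on $\mathbb{R}^d$ belongs to $\mathcal F_{\mathrm{FSSA}}$ if there exist, for each $m\ge1$, a partition $\operatorname{supp}(f)=A^{(m)}_0\sqcup A^{(m)}_1\sqcup\cdots\sqcup A^{(m)}_m$ in which $A^{(m)}_1,\dots,A^{(m)}_m$ are adjacent cubes of common side length $h_m>0$ and $A^{(m)}_0$ is the remainder, such that: (i) $f$ is continuous on $\operatorname{supp}(f)$ except on a set of $F$-measure zero; (ii) there exist $r>0$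 and, for every $y\in\operatorname{supp}(f)$, a comparison cube $C(r,y)$ of side length $r$ containing $y$, such that $D_r(y)=\log\big(f(y)/\inf_{z\in C(r,y)}f(z)\big)$ is measurable on $\operatorname{supp}(f)$ and $\int_{\operatorname{supp}(f)}D_r\,\mathrm{d}F<\infty$; (iii) there exists $M\in\mathbb N$ such that for every $m\ge M$: (a) if $y\in A^{(m)}_0$ then $C(r,y)\cap A^{(m)}_0$ contains a cube of side $r/2$ with a vertex at $y$; (b) if $y\in\operatorname{supp}(f)\setminus A^{(m)}_0$ then $C(r,y)\cap(\operatorname{supp}(f)\setminus A^{(m)}_0)$ contains a cube of side $r/2$ with a vertex at $y$. *)

theory Defs
  imports "HOL-Analysis.Analysis"
begin

definition log_plus :: "real \<Rightarrow> real" where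
  "log_plus t = (if t > 0 then max (ln t) 0 else 0)"

definition supp_dens :: "('a \<Rightarrow> real) \<Rightarrow> 'a set" where
  "supp_dens f = {x. f x > 0}"

definition closed_cube :: "'a::euclidean_space set \<Rightarrow> real \<Rightarrow> bool" where
  "closed_cube S s \<longleftrightarrow> (\<exists>a. S = cbox a (a + s *\<^sub>R One))"

text \<open>Axis-aligned cube of side s, possibly with part of its boundary removed
  (e.g. half-open): lies between the open and the closed box.\<close>
definition partition_cube :: "'a::euclidean_space set \<Rightarrow> real \<Rightarrow> bool" where
  "partition_cube S s \<longleftrightarrow>
     (\<exists>a. box a (a + s *\<^sub>R One) \<subseteq> S \<and> S \<subseteq> cbox a (a + s *\<^sub>R One))"

definition vertex_cube :: "'a::euclidean_space set \<Rightarrow> real \<Rightarrow> 'a \<Rightarrow> bool" where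
  "vertex_cube S s y \<longleftrightarrow>
     (\<exists>a. S = cbox a (a + s *\<^sub>R One) \<and>
          (\<forall>i\<in>Basis. y \<bullet> i = a \<bullet> i \<or> y \<bullet> i = a \<bullet> i + s))"

definition D_fun :: "('a \<Rightarrow> real) \<Rightarrow> ('a \<Rightarrow> 'a set) \<Rightarrow> 'a \<Rightarrow> ennreal" where
  "D_fun f C y = (if Inf (f ` C y) > 0 then ennreal (ln (f y / Inf (f ` C y))) else \<infinity>)"

end

theory Submission
  imports Defs
begin


lemma cube_inf_bound:
  fixes q :: "'a::euclidean_space \<Rightarrow> real"
  assumes q_meas: "q \<in> borel_measurable lebesgue"
    and q_nonneg: "\<And>x. q x \<ge> 0"
    and q_int: "integrable lebesgue q"
    and q_one: "integral\<^sup>L lebesgue q = 1"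
    and r_pos: "r > 0"
    and S: "S = cbox a (a + r *\<^sub>R One)"
  shows "Inf (q ` S) * r ^ DIM('a) \<le> 1"
proof -
  let ?m = "Inf (q ` S)"
  have Sne: "S \<noteq> {}" using S r_pos by (auto simp: box_ne_empty inner_add_left inner_Basis)
  have bdd: "bdd_below (q ` S)" using q_nonneg by (auto intro!: bdd_belowI[of _ 0])
  have m0: "?m \<ge> 0" using Sne q_nonneg by (auto intro!: cInf_greatest)
  have meas: "emeasure lebesgue S = ennreal (r ^ DIM('a))"
  proof -
    have "emeasure lebesgue S = emeasure lborel S" using S by simp
    also have "\<dots> = ennreal (\<Prod>b\<in>(Basis::'a set). r)"
      using S r_pos by (simp add: emeasure_lborel_cbox_eq inner_add_left inner_diff_left inner_Basis)
    finally show ?thesis by simp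
  qed
  have "ennreal (?m * r ^ DIM('a)) = (\<integral>\<^sup>+ x. ennreal ?m * indicator S x \<partial>lebesgue)"
  proof -
    have "S \<in> sets lebesgue" using S by simp
    then show ?thesis using m0 r_pos meas by (simp add: nn_integral_cmult_indicator ennreal_mult)
  qed
  also have "\<dots> \<le> (\<integral>\<^sup>+ x. ennreal (q x) \<partial>lebesgue)"
  proof (rule nn_integral_mono)
    fix x show "ennreal ?m * indicator S x \<le> ennreal (q x)"
    proof (cases "x \<in> S")
      case True
      then have "?m \<le> q x" using bdd by (auto intro: cInf_lower)
      then show ?thesis using True by (simp add: ennreal_leI)
    qed simp
  qed
  also have "\<dots> = ennreal 1"
    using nn_integral_eq_integral[OF q_int] q_nonneg q_one by simp
  finally show ?thesis using m0 r_pos by (simp add: ennreal_le_iff)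
qed

theorem mainTheorem11:
  fixes q :: "'a::euclidean_space \<Rightarrow> real"
    and r :: real
    and C :: "'a \<Rightarrow> 'a set"
    and A :: "nat \<Rightarrow> nat \<Rightarrow> 'a set"
    and h :: "nat \<Rightarrow> real"
    and M :: nat
  assumes q_meas: "q \<in> borel_measurable lebesgue"
    and q_nonneg: "\<And>x. q x \<ge> 0"
    and q_int: "integrable lebesgue q"
    and q_one: "integral\<^sup>L lebesgue q = 1"
    \<comment> \<open>partitions of the support, for every m \<ge> 1\<close>
    and part_union: "\<And>m. m \<ge> 1 \<Longrightarrow> supp_dens q = (\<Union>i\<in>{0..m}. A m i)"
    and part_disj: "\<And>m i j. m \<ge> 1 \<Longrightarrow> i \<le> m \<Longrightarrow> j \<le> m \<Longrightarrow> i \<noteq> j \<Longrightarrow> A m i \<inter> A m j = {}"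
    and h_pos: "\<And>m. m \<ge> 1 \<Longrightarrow> h m > 0"
    and part_cubes: "\<And>m i. m \<ge> 1 \<Longrightarrow> i \<in> {1..m} \<Longrightarrow> partition_cube (A m i) (h m)"
    and part_interiors: "\<And>m i j. m \<ge> 1 \<Longrightarrow> i \<in> {1..m} \<Longrightarrow> j \<in> {1..m} \<Longrightarrow> i \<noteq> j \<Longrightarrow>
                           interior (A m i) \<inter> interior (A m j) = {}"
    and part_connected: "\<And>m. m \<ge> 1 \<Longrightarrow> connected (\<Union>i\<in>{1..m}. closure (A m i))"
    \<comment> \<open>(i) continuity on the support outside a Q-null set\<close>
    and cont: "\<exists>N \<in> sets lebesgue. emeasure (density lebesgue (\<lambda>x. ennreal (q x))) N = 0 \<and>
                 (\<forall>y \<in> supp_dens q - N. continuous (at y within supp_dens q) q)"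
    \<comment> \<open>(ii) comparison cubes and integrability of D_r\<close>
    and r_pos: "r > 0"
    and C_cube: "\<And>y. y \<in> supp_dens q \<Longrightarrow> closed_cube (C y) r \<and> y \<in> C y"
    and D_meas: "(\<lambda>y. D_fun q C y * indicator (supp_dens q) y) \<in> borel_measurable lebesgue"
    and D_fin: "(\<integral>\<^sup>+ y. D_fun q C y * indicator (supp_dens q) y
                    \<partial>(density lebesgue (\<lambda>x. ennreal (q x)))) < \<infinity>"
    \<comment> \<open>(iii) vertex-cube conditions for m \<ge> M\<close>
    and iii_a: "\<And>m y. m \<ge> M \<Longrightarrow> m \<ge> 1 \<Longrightarrow> y \<in> A m 0 \<Longrightarrow>
                   \<exists>K. vertex_cube K (r/2) y \<and> K \<subseteq> C y \<inter> A m 0"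
    and iii_b: "\<And>m y. m \<ge> M \<Longrightarrow> m \<ge> 1 \<Longrightarrow> y \<in> supp_dens q - A m 0 \<Longrightarrow>
                   \<exists>K. vertex_cube K (r/2) y \<and> K \<subseteq> C y \<inter> (supp_dens q - A m 0)"
  shows "integrable lebesgue (\<lambda>y. q y * log_plus (q y)) \<and>
         ennreal (integral\<^sup>L lebesgue (\<lambda>y. q y * log_plus (q y)))
           \<le> (\<integral>\<^sup>+ y. D_fun q C y * indicator (supp_dens q) y
                  \<partial>(density lebesgue (\<lambda>x. ennreal (q x))))
             + ennreal (real DIM('a) * log_plus (2 / r))"
proof -
  let ?Q = "density lebesgue (\<lambda>x. ennreal (q x))"
  let ?c = "real DIM('a) * log_plus (2 / r)"
  let ?D = "\<lambda>y. D_fun q C y * indicator (supp_dens q) y"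
  have c0: "?c \<ge> 0" by (simp add: log_plus_def)
  have pw: "ennreal (q y * log_plus (q y)) \<le> ennreal (q y) * ?D y + ennreal (q y) * ennreal ?c" for y
  proof (cases "q y > 0")
    case False
    then have "q y = 0" using q_nonneg[of y] by linarith
    then show ?thesis by simp
  next
    case qp: True
    then have ys: "y \<in> supp_dens q" by (simp add: supp_dens_def)
    obtain a where Ca: "C y = cbox a (a + r *\<^sub>R One)" and yC: "y \<in> C y"
      using C_cube[OF ys] unfolding closed_cube_def by blast
    let ?m = "Inf (q ` C y)"
    show ?thesis
    proof (cases "?m > 0")
      case False
      then have "D_fun q C y = \<infinity>" by (simp add: D_fun_def)
      then show ?thesis using ys qp by (simp add: ennreal_mult_top)
    next
      case mp: True
      have bdd: "bdd_below (q ` C y)" using q_nonneg by (auto intro!: bdd_belowI[of _ 0])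
      have mle: "?m \<le> q y" using yC bdd by (auto intro: cInf_lower)
      have mr: "?m * r ^ DIM('a) \<le> 1"
        by (rule cube_inf_bound[OF q_meas q_nonneg q_int q_one r_pos Ca])
      have lnm: "ln ?m \<le> real DIM('a) * ln (1 / r)"
      proof -
        have "?m \<le> (1/r) ^ DIM('a)" using mr r_pos by (simp add: field_simps)
        then have "ln ?m \<le> ln ((1/r) ^ DIM('a))" using mp r_pos by simp
        also have "\<dots> = real DIM('a) * ln (1/r)" using r_pos by (simp add: ln_realpow)
        finally show ?thesis .
      qed
      have "ln (1/r) \<le> ln (2/r)" using r_pos by (simp add: divide_right_mono)
      then have "ln (1/r) \<le> max (ln (2/r)) 0" by linarith
      then have "ln (1/r) \<le> log_plus (2/r)"
        using r_pos by (simp add: log_plus_def)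
      then have lnm2: "ln ?m \<le> ?c" using lnm
        by (smt (verit) mult_left_mono of_nat_0_le_iff)
      have Deq: "D_fun q C y = ennreal (ln (q y / ?m))" using mp by (simp add: D_fun_def)
      have lq: "ln (q y / ?m) = ln (q y) - ln ?m" using mp qp by (simp add: ln_div)
      have lnn: "ln (q y / ?m) \<ge> 0" using mp mle by simp
      have key: "log_plus (q y) \<le> ln (q y / ?m) + ?c"
        using lq lnn lnm2 c0 qp by (auto simp: log_plus_def)
      have "q y * log_plus (q y) \<le> q y * ln (q y / ?m) + q y * ?c"
        using mult_left_mono[OF key, of "q y"] qp by (simp add: distrib_left)
      then have "ennreal (q y * log_plus (q y)) \<le> ennreal (q y * ln (q y / ?m) + q y * ?c)"
        by (rule ennreal_leI)
      also have "\<dots> = ennreal (q y) * ?D y + ennreal (q y) * ennreal ?c"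
        using ys Deq qp lnn c0 by (simp add: ennreal_plus ennreal_mult)
      finally show ?thesis .
    qed
  qed
  have lp_meas: "log_plus \<in> borel_measurable borel"
    unfolding log_plus_def by measurable
  have f_meas: "(\<lambda>y. q y * log_plus (q y)) \<in> borel_measurable lebesgue"
    using q_meas lp_meas by measurable
  have Dint: "(\<integral>\<^sup>+ y. ?D y \<partial>?Q) = (\<integral>\<^sup>+ y. ennreal (q y) * ?D y \<partial>lebesgue)"
    using q_meas D_meas by (simp add: nn_integral_density)
  have qint1: "(\<integral>\<^sup>+ y. ennreal (q y) \<partial>lebesgue) = 1"
    using nn_integral_eq_integral[OF q_int] q_nonneg q_one by simp
  have bound: "(\<integral>\<^sup>+ y. ennreal (q y * log_plus (q y)) \<partial>lebesgue) \<le> (\<integral>\<^sup>+ y. ?D y \<partial>?Q) + ennreal ?c"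
  proof -
    have "(\<integral>\<^sup>+ y. ennreal (q y * log_plus (q y)) \<partial>lebesgue)
        \<le> (\<integral>\<^sup>+ y. ennreal (q y) * ?D y + ennreal (q y) * ennreal ?c \<partial>lebesgue)"
      by (rule nn_integral_mono) (rule pw)
    also have "\<dots> = (\<integral>\<^sup>+ y. ennreal (q y) * ?D y \<partial>lebesgue) + (\<integral>\<^sup>+ y. ennreal (q y) * ennreal ?c \<partial>lebesgue)"
      using q_meas D_meas by (intro nn_integral_add) auto
    also have "(\<integral>\<^sup>+ y. ennreal (q y) * ennreal ?c \<partial>lebesgue) = (\<integral>\<^sup>+ y. ennreal (q y) \<partial>lebesgue) * ennreal ?c"
      using q_meas by (simp add: nn_integral_multc)
    finally show ?thesis using Dint qint1 by simp
  qed
  have fin: "(\<integral>\<^sup>+ y. ennreal (norm (q y * log_plus (q y))) \<partial>lebesgue) < \<infinity>"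
  proof -
    have "\<And>y. norm (q y * log_plus (q y)) = q y * log_plus (q y)"
      using q_nonneg by (simp add: log_plus_def)
    then have "(\<integral>\<^sup>+ y. ennreal (norm (q y * log_plus (q y))) \<partial>lebesgue) = (\<integral>\<^sup>+ y. ennreal (q y * log_plus (q y)) \<partial>lebesgue)"
      by simp
    also have "\<dots> < \<infinity>" using bound D_fin by (simp add: order_le_less_trans)
    finally show ?thesis .
  qed
  have int: "integrable lebesgue (\<lambda>y. q y * log_plus (q y))"
    by (rule integrableI_bounded[OF f_meas fin])
  have "ennreal (integral\<^sup>L lebesgue (\<lambda>y. q y * log_plus (q y))) = (\<integral>\<^sup>+ y. ennreal (q y * log_plus (q y)) \<partial>lebesgue)"
    using q_nonneg by (intro nn_integral_eq_integral[OF int, symmetric]) (auto simp: log_plus_def)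
  with bound int show ?thesis by simp
qed

end
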